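(* Let $G$ be a finitely generated group hyperbolic relative to a finite collection $\mathcal P$, $S$ a finite generating set, $(\epsilon,R,D)$ thin-triangle constants, and $U\subset V\cup W$ a finite subset with $|U|\ge 2$. Then for every positive integer $r$, the $r$-hull $U_r$ is finite.
   Context: $\Gamma$ is the Cayley graph of $G$ w.r.t. $S$, $V=G$, $W$ the set of cosets $gP_\lambda$; relative hyperbolicity means the coned-off Cayley graph (vertex set $V\cup W$, edges of $\Gamma$ plus edges $(v,w)$ for $v\in w$) is fine (for each edge $e$ and integer $m$, finitely many circuits of length $\le m$ contain $e$) and $\delta$-hyperbolic. $|\cdot,\cdot|_S$ is extended to $V\cup W$ via distances in $\Gamma$ between corresponding elements/cosets. For a geodesic edge-path $p=(p_j)_{j=0}^\ell$ in $\Gamma$, $p_i$ is $(\epsilon,R)$-deep in $w\in W$ if $R\le i\le\ell-R$ and $|p_j,w|_S\le\epsilon$ for all $|j-i|\le R$. A geodesic from $a$ to $b$ ($a,b\in V\cup W$) is a geodesic of length $|a,b|_S$ starting at $a$ (if $a\in V$) or in $a$ (if $a\in W$), ending analogously at $b$; for $i>\ell$, $p_i:=p_\ell$. Positive integers $(\epsilon,R,D)$ are thin-triangle constants if: $D\ge\epsilon$; no vertex of a geodesic in $\Gamma$ is $(\epsilon,R)$-deep in two distinct cosets; and for all $a,b,c\in V\cup W$ with $a\ne b$, geodesics $p^{ab},p^{bc},p^{ac}$, $\ell=|a,b|_S$, $0\le i\le\ell$, with $z=w$ if $p^{ab}_i$ is $(\epsilon,R)$-deep in $w$ and $z=p^{ab}_i$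 otherwise, we have $|z,p^{ac}_i|_S\le D$ or $|z,p^{bc}_{\ell-i}|_S\le D$. The $r$-hull $U_r$ of finite $U$ is the union of all $v\in V$ with $|v,u|_S\le r$ for every $u\in U$, and all $w\in W$ with $|w,u|_S\le r+\epsilon$ for every $u\in U$. *)

theory Defs
  imports Complex_Main
begin

definition walk :: "('v \<Rightarrow> 'v \<Rightarrow> bool) \<Rightarrow> 'v list \<Rightarrow> bool" where
  "walk E p \<longleftrightarrow> p \<noteq> [] \<and> (\<forall>i. Suc i < length p \<longrightarrow> E (p ! i) (p ! Suc i))"

definition gdist :: "('v \<Rightarrow> 'v \<Rightarrow> bool) \<Rightarrow> 'v \<Rightarrow> 'v \<Rightarrow> nat" where
  "gdist E x y = (LEAST n. \<exists>p. walk E p \<and> hd p = x \<and> last p = y \<and> length p = Suc n)"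

text \<open>A circuit: a closed edge path without repeated vertices, given by its
  cyclic list of vertices; its length is the number of its edges = vertices.\<close>
definition circuit :: "('v \<Rightarrow> 'v \<Rightarrow> bool) \<Rightarrow> 'v list \<Rightarrow> bool" where
  "circuit E c \<longleftrightarrow> length c \<ge> 3 \<and> distinct c \<and>
     (\<forall>i < length c. E (c ! i) (c ! ((i + 1) mod length c)))"

definition circuit_contains_edge :: "'v list \<Rightarrow> 'v \<Rightarrow> 'v \<Rightarrow> bool" where
  "circuit_contains_edge c a b \<longleftrightarrow>
     (\<exists>i < length c. {c ! i, c ! ((i + 1) mod length c)} = {a, b})"

definition fine_graph :: "('v \<Rightarrow> 'v \<Rightarrow> bool) \<Rightarrow> bool" where
  "fine_graph E \<longleftrightarrow> (\<forall>a b. E a b \<longrightarrow> (\<forall>m::nat.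
      finite {c. circuit E c \<and> length c \<le> m \<and> circuit_contains_edge c a b}))"

definition gromov_product :: "('v \<Rightarrow> 'v \<Rightarrow> bool) \<Rightarrow> 'v \<Rightarrow> 'v \<Rightarrow> 'v \<Rightarrow> real" where
  "gromov_product E w x y =
     (real (gdist E x w) + real (gdist E y w) - real (gdist E x y)) / 2"

definition hyperbolic_graph :: "('v \<Rightarrow> 'v \<Rightarrow> bool) \<Rightarrow> 'v set \<Rightarrow> real \<Rightarrow> bool" where
  "hyperbolic_graph E Vs \<delta> \<longleftrightarrow>
     (\<forall>x\<in>Vs. \<forall>y\<in>Vs. \<exists>p. walk E p \<and> hd p = x \<and> last p = y) \<and>
     (\<forall>w\<in>Vs. \<forall>x\<in>Vs. \<forall>y\<in>Vs. \<forall>z\<in>Vs.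
        gromov_product E w x y \<ge> min (gromov_product E w x z) (gromov_product E w z y) - \<delta>)"

text \<open>The group \<open>G\<close> is the whole type \<open>'g::group_add\<close> (written additively, not
  necessarily commutative).  Cayley graph adjacency w.r.t. \<open>S\<close>: \<open>g ~ g s\<close>.\<close>
definition cay_adj :: "'g::group_add set \<Rightarrow> 'g \<Rightarrow> 'g \<Rightarrow> bool" where
  "cay_adj S g h \<longleftrightarrow> (\<exists>s\<in>S. h = g + s \<or> g = h + s)"

definition is_subgroup :: "'g::group_add set \<Rightarrow> bool" where
  "is_subgroup H \<longleftrightarrow> 0 \<in> H \<and> (\<forall>x\<in>H. \<forall>y\<in>H. x + y \<in> H) \<and> (\<forall>x\<in>H. - x \<in> H)"

definition lcoset :: "'g::group_add \<Rightarrow> 'g set \<Rightarrow> 'g set" where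
  "lcoset g H = (\<lambda>x. g + x) ` H"

definition cosets :: "'i set \<Rightarrow> ('i \<Rightarrow> 'g::group_add set) \<Rightarrow> 'g set set" where
  "cosets \<Lambda> P = {lcoset g (P l) | g l. l \<in> \<Lambda>}"

text \<open>Elements of \<open>V \<union> W\<close> are encoded as \<open>Inl g\<close> (vertex) or \<open>Inr w\<close> (coset).\<close>
definition VW :: "'i set \<Rightarrow> ('i \<Rightarrow> 'g::group_add set) \<Rightarrow> ('g + 'g set) set" where
  "VW \<Lambda> P = range Inl \<union> Inr ` cosets \<Lambda> P"

fun coned_adj :: "'g::group_add set \<Rightarrow> 'i set \<Rightarrow> ('i \<Rightarrow> 'g set) \<Rightarrow> ('g + 'g set) \<Rightarrow> ('g + 'g set) \<Rightarrow> bool" where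
  "coned_adj S \<Lambda> P (Inl g) (Inl h) = cay_adj S g h"
| "coned_adj S \<Lambda> P (Inl g) (Inr w) = (w \<in> cosets \<Lambda> P \<and> g \<in> w)"
| "coned_adj S \<Lambda> P (Inr w) (Inl g) = (w \<in> cosets \<Lambda> P \<and> g \<in> w)"
| "coned_adj S \<Lambda> P (Inr w) (Inr w') = False"

definition rel_hyperbolic :: "'g::group_add set \<Rightarrow> 'i set \<Rightarrow> ('i \<Rightarrow> 'g set) \<Rightarrow> bool" where
  "rel_hyperbolic S \<Lambda> P \<longleftrightarrow>
     finite S \<and> (\<forall>g h. \<exists>p. walk (cay_adj S) p \<and> hd p = g \<and> last p = h) \<and>
     finite \<Lambda> \<and> (\<forall>l\<in>\<Lambda>. is_subgroup (P l)) \<and>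
     fine_graph (coned_adj S \<Lambda> P) \<and>
     (\<exists>\<delta>. hyperbolic_graph (coned_adj S \<Lambda> P) (VW \<Lambda> P) \<delta>)"

definition dS :: "'g::group_add set \<Rightarrow> 'g \<Rightarrow> 'g \<Rightarrow> nat" where
  "dS S = gdist (cay_adj S)"

fun dVW :: "'g::group_add set \<Rightarrow> ('g + 'g set) \<Rightarrow> ('g + 'g set) \<Rightarrow> nat" where
  "dVW S (Inl g) (Inl h) = dS S g h"
| "dVW S (Inl g) (Inr w) = (LEAST n. \<exists>h\<in>w. dS S g h = n)"
| "dVW S (Inr w) (Inl g) = (LEAST n. \<exists>h\<in>w. dS S h g = n)"
| "dVW S (Inr w) (Inr w') = (LEAST n. \<exists>g\<in>w. \<exists>h\<in>w'. dS S g h = n)"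

text \<open>An edge path \<open>p = (p\<^sub>0,\<dots>,p\<^sub>\<ell>)\<close> is the list of its vertices (length \<open>\<ell>+1\<close>).\<close>
definition geodesic_path :: "'g::group_add set \<Rightarrow> 'g list \<Rightarrow> bool" where
  "geodesic_path S p \<longleftrightarrow> walk (cay_adj S) p \<and> length p = Suc (dS S (hd p) (last p))"

text \<open>\<open>p\<^sub>i\<close>, with the convention \<open>p\<^sub>i = p\<^sub>\<ell>\<close> for \<open>i > \<ell>\<close>.\<close>
definition pt :: "'g list \<Rightarrow> nat \<Rightarrow> 'g" where
  "pt p i = p ! min i (length p - 1)"

definition deep :: "'g::group_add set \<Rightarrow> nat \<Rightarrow> nat \<Rightarrow> 'g list \<Rightarrow> nat \<Rightarrow> 'g set \<Rightarrow> bool" where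
  "deep S \<epsilon> R p i w \<longleftrightarrow> R \<le> i \<and> i + R \<le> length p - 1 \<and>
     (\<forall>j. i - R \<le> j \<and> j \<le> i + R \<longrightarrow> dVW S (Inl (pt p j)) (Inr w) \<le> \<epsilon>)"

fun starts_at :: "('g + 'g set) \<Rightarrow> 'g \<Rightarrow> bool" where
  "starts_at (Inl g) x = (x = g)"
| "starts_at (Inr w) x = (x \<in> w)"

definition geodesic_from_to :: "'g::group_add set \<Rightarrow> ('g + 'g set) \<Rightarrow> ('g + 'g set) \<Rightarrow> 'g list \<Rightarrow> bool" where
  "geodesic_from_to S a b p \<longleftrightarrow> geodesic_path S p \<and> length p = Suc (dVW S a b) \<and>
     starts_at a (hd p) \<and> starts_at b (last p)"

definition thin_triangle_constants ::
  "'g::group_add set \<Rightarrow> 'i set \<Rightarrow> ('i \<Rightarrow> 'g set) \<Rightarrow> nat \<Rightarrow> nat \<Rightarrow> nat \<Rightarrow> bool" where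
  "thin_triangle_constants S \<Lambda> P \<epsilon> R D \<longleftrightarrow>
     0 < \<epsilon> \<and> 0 < R \<and> 0 < D \<and> \<epsilon> \<le> D \<and>
     (\<forall>p i w1 w2. geodesic_path S p \<and> w1 \<in> cosets \<Lambda> P \<and> w2 \<in> cosets \<Lambda> P \<and>
        deep S \<epsilon> R p i w1 \<and> deep S \<epsilon> R p i w2 \<longrightarrow> w1 = w2) \<and>
     (\<forall>a\<in>VW \<Lambda> P. \<forall>b\<in>VW \<Lambda> P. \<forall>c\<in>VW \<Lambda> P. \<forall>pab pbc pac. a \<noteq> b \<and>
        geodesic_from_to S a b pab \<and> geodesic_from_to S b c pbc \<and> geodesic_from_to S a c pac \<longrightarrow>
        (\<forall>i \<le> dVW S a b.
           (\<forall>w\<in>cosets \<Lambda> P. deep S \<epsilon> R pab i w \<longrightarrow>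
              dVW S (Inr w) (Inl (pt pac i)) \<le> D \<or>
              dVW S (Inr w) (Inl (pt pbc (dVW S a b - i))) \<le> D) \<and>
           ((\<not> (\<exists>w\<in>cosets \<Lambda> P. deep S \<epsilon> R pab i w)) \<longrightarrow>
              dVW S (Inl (pt pab i)) (Inl (pt pac i)) \<le> D \<or>
              dVW S (Inl (pt pab i)) (Inl (pt pbc (dVW S a b - i))) \<le> D)))"

definition r_hull :: "'g::group_add set \<Rightarrow> 'i set \<Rightarrow> ('i \<Rightarrow> 'g set) \<Rightarrow> nat \<Rightarrow>
    ('g + 'g set) set \<Rightarrow> nat \<Rightarrow> ('g + 'g set) set" where
  "r_hull S \<Lambda> P \<epsilon> U r =
     {Inl v | v. \<forall>u\<in>U. dVW S (Inl v) u \<le> r} \<union>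
     {Inr w | w. w \<in> cosets \<Lambda> P \<and> (\<forall>u\<in>U. dVW S (Inr w) u \<le> r + \<epsilon>)}"

end

theory Submission
  imports Defs
begin

lemma walk_Cons: "walk E (x # p) \<longleftrightarrow> (p = [] \<or> (E x (hd p) \<and> walk E p))"
proof
  assume w: "walk E (x # p)"
  show "p = [] \<or> (E x (hd p) \<and> walk E p)"
  proof (cases p)
    case Nil then show ?thesis by simp
  next
    case (Cons y q)
    have a: "\<forall>i. Suc i < length (x # p) \<longrightarrow> E ((x # p) ! i) ((x # p) ! Suc i)"
      using w unfolding walk_def by blast
    have "Suc 0 < length (x # p)" using Cons by simp
    from a[rule_format, OF this] have "E ((x # p) ! 0) ((x # p) ! Suc 0)" .
    then have "E x y" using Cons by simp
    moreover have "walk E p" unfolding walk_def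
    proof (intro conjI allI impI)
      show "p \<noteq> []" using Cons by simp
      fix i assume "Suc i < length p"
      then have "Suc (Suc i) < length (x # p)" by simp
      from a[rule_format, OF this] have "E ((x # p) ! Suc i) ((x # p) ! Suc (Suc i))" .
      then show "E (p ! i) (p ! Suc i)" by simp
    qed
    ultimately show ?thesis using Cons by simp
  qed
next
  assume h: "p = [] \<or> (E x (hd p) \<and> walk E p)"
  show "walk E (x # p)"
  proof (cases p)
    case Nil then show ?thesis by (simp add: walk_def)
  next
    case (Cons y q)
    with h have e: "E x y" and w: "walk E p" by auto
    show ?thesis unfolding walk_def
    proof (intro conjI allI impI)
      fix i assume i: "Suc i < length (x # p)"
      show "E ((x # p) ! i) ((x # p) ! Suc i)"
      proof (cases i)
        case 0 then show ?thesis using e Cons by simp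
      next
        case (Suc j) then show ?thesis using w i unfolding walk_def by simp
      qed
    qed simp
  qed
qed

lemma walk_single[simp]: "walk E [x]" by (simp add: walk_def)

lemma walk_app: "walk E p \<Longrightarrow> walk E q \<Longrightarrow> last p = hd q \<Longrightarrow> walk E (p @ tl q)"
proof (induction p)
  case Nil then show ?case by (simp add: walk_def)
next
  case (Cons x p)
  show ?case
  proof (cases "p = []")
    case True
    then show ?thesis using Cons.prems
      by (metis append_Cons append_Nil last_ConsL list.collapse walk_def)
  next
    case False
    then obtain y p' where Cons2: "p = y # p'" by (meson list.exhaust)
    have "walk E p" "E x y" using Cons.prems(1) Cons2 by (auto simp: walk_Cons)
    then have "walk E (p @ tl q)" using Cons.IH Cons.prems Cons2 by simp
    then show ?thesis using \<open>E x y\<close> Cons2 by (simp add: walk_Cons)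
  qed
qed

lemma walk_suffix: "walk E (xs @ ys) \<Longrightarrow> ys \<noteq> [] \<Longrightarrow> walk E ys"
  by (induction xs) (auto simp: walk_Cons)

lemma walk_map: "walk E p \<Longrightarrow> (\<And>x y. E x y \<Longrightarrow> F (f x) (f y)) \<Longrightarrow> walk F (map f p)"
  unfolding walk_def by auto

lemma walk_rev:
  assumes "walk E p" and sym: "\<And>x y. E x y \<Longrightarrow> E y x"
  shows "walk E (rev p)"
  unfolding walk_def
proof (intro conjI allI impI)
  show "rev p \<noteq> []" using assms unfolding walk_def by simp
  fix i assume i: "Suc i < length (rev p)"
  define j where "j = length p - 2 - i"
  have "E (p ! j) (p ! Suc j)" using assms(1) i unfolding walk_def j_def by auto
  moreover have "rev p ! i = p ! Suc j" "rev p ! Suc i = p ! j"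
    using i by (auto simp: rev_nth j_def Suc_diff_Suc numeral_2_eq_2)
  ultimately show "E (rev p ! i) (rev p ! Suc i)" using sym by simp
qed

lemma walk_distinct:
  "walk E p \<Longrightarrow> \<exists>q. walk E q \<and> hd q = hd p \<and> last q = last p \<and> distinct q \<and> set q \<subseteq> set p \<and> length q \<le> length p"
proof (induction p)
  case Nil then show ?case by (simp add: walk_def)
next
  case (Cons x p)
  show ?case
  proof (cases p)
    case Nil then show ?thesis by (intro exI[of _ "[x]"]) simp
  next
    case (Cons y p')
    have wp: "walk E p" and e: "E x y" using Cons.prems Cons by (auto simp: walk_Cons)
    obtain q where q: "walk E q" "hd q = hd p" "last q = last p" "distinct q" "set q \<subseteq> set p" "length q \<le> length p"
      using Cons.IH wp by blast
    have qne: "q \<noteq> []" using q(1) walk_def by metis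
    show ?thesis
    proof (cases "x \<in> set q")
      case False
      show ?thesis
        apply (intro exI[of _ "x # q"])
        using q qne False e Cons by (auto simp: walk_Cons)
    next
      case True
      then obtain ys zs where qs: "q = ys @ x # zs" by (meson split_list)
      have "walk E (x # zs)" using walk_suffix q(1) qs by blast
      moreover have "last (x # zs) = last q" using qs by simp
      moreover have "distinct (x # zs)" using q(4) qs by simp
      moreover have "length (x # zs) \<le> length (x # p)" using q(6) qs by simp
      moreover have "set (x # zs) \<subseteq> set (x # p)" using q(5) qs by auto
      ultimately show ?thesis using Cons q(3)
        by (intro exI[of _ "x # zs"]) (simp add: Cons.prems)
    qed
  qed
qed

definition reach :: "('v \<Rightarrow> 'v \<Rightarrow> bool) \<Rightarrow> 'v set \<Rightarrow> 'v \<Rightarrow> 'v \<Rightarrow> nat \<Rightarrow> bool" where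
  "reach E X x y n \<longleftrightarrow> (\<exists>p. walk E p \<and> hd p = x \<and> last p = y \<and> length p \<le> Suc n \<and> set p \<subseteq> X)"

lemma reach_trans:
  assumes "reach E X x y n" "reach E X y z m" shows "reach E X x z (n + m)"
proof -
  obtain p where p: "walk E p" "hd p = x" "last p = y" "length p \<le> Suc n" "set p \<subseteq> X"
    using assms(1) reach_def by metis
  obtain q where q: "walk E q" "hd q = y" "last q = z" "length q \<le> Suc m" "set q \<subseteq> X"
    using assms(2) reach_def by metis
  have pne: "p \<noteq> []" and qne: "q \<noteq> []" using p(1) q(1) walk_def by metis+
  have "walk E (p @ tl q)" using walk_app[OF p(1) q(1)] p q by simp
  moreover have "hd (p @ tl q) = x" using pne p by simp
  moreover have "last (p @ tl q) = z"
    using pne qne p q by (cases q) auto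
  moreover have "length (p @ tl q) \<le> Suc (n + m)" using p q qne by (cases q) auto
  moreover have "set (p @ tl q) \<subseteq> X" using p q by (cases q) auto
  ultimately show ?thesis unfolding reach_def by blast
qed

lemma reach_edge: "E x y \<Longrightarrow> x \<in> X \<Longrightarrow> y \<in> X \<Longrightarrow> reach E X x y 1"
  unfolding reach_def by (intro exI[of _ "[x, y]"]) (auto simp: walk_Cons)

lemma reach_sym: "reach E X x y n \<Longrightarrow> (\<And>x y. E x y \<Longrightarrow> E y x) \<Longrightarrow> reach E X y x n"
  unfolding reach_def
  by (metis walk_rev hd_rev last_rev length_rev set_rev)

lemma reach_mono: "reach E X x y n \<Longrightarrow> X \<subseteq> Y \<Longrightarrow> n \<le> m \<Longrightarrow> reach E Y x y m"
proof -
  assume a: "reach E X x y n" "X \<subseteq> Y" "n \<le> m"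
  then obtain p where "walk E p" "hd p = x" "last p = y" "length p \<le> Suc n" "set p \<subseteq> X"
    unfolding reach_def by blast
  then show ?thesis unfolding reach_def using a(2,3)
    by (intro exI[of _ p]) auto
qed

lemma reach_map: "reach E X x y n \<Longrightarrow> (\<And>x y. E x y \<Longrightarrow> F (f x) (f y)) \<Longrightarrow> reach F (f ` X) (f x) (f y) n"
  unfolding reach_def
  apply clarify
  subgoal for p by (intro exI[of _ "map f p"]) (auto simp: walk_map hd_map last_map walk_def)
  done

lemma reach_Suc: "reach E X x y (Suc n) \<Longrightarrow> x = y \<or> (\<exists>z. E x z \<and> reach E X z y n)"
proof -
  assume "reach E X x y (Suc n)"
  then obtain p where p: "walk E p" "hd p = x" "last p = y" "length p \<le> Suc (Suc n)" "set p \<subseteq> X"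
    unfolding reach_def by blast
  show ?thesis
  proof (cases p)
    case Nil then show ?thesis using p walk_def by metis
  next
    case (Cons a q)
    show ?thesis
    proof (cases q)
      case Nil then show ?thesis using Cons p by simp
    next
      case (Cons b q')
      have "E x b" "reach E X b y n" using p \<open>p = a # q\<close> Cons unfolding reach_def
        by (auto simp: walk_Cons intro!: exI[of _ q])
      then show ?thesis by blast
    qed
  qed
qed


lemma coned_sym: "coned_adj S \<Lambda> P x y \<Longrightarrow> coned_adj S \<Lambda> P y x"
  by (cases x; cases y) (auto simp: cay_adj_def)

lemma cay_sym: "cay_adj S x y \<Longrightarrow> cay_adj S y x"
  by (auto simp: cay_adj_def)

lemma coset_member:
  assumes "w \<in> cosets \<Lambda> P" "\<forall>l\<in>\<Lambda>. is_subgroup (P l)" "h \<in> w"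
  shows "\<exists>l\<in>\<Lambda>. w = lcoset h (P l)"
proof -
  obtain g l where gl: "w = lcoset g (P l)" "l \<in> \<Lambda>" using assms(1) unfolding cosets_def by blast
  then have sg: "is_subgroup (P l)" using assms(2) by blast
  obtain x where x: "x \<in> P l" "h = g + x" using assms(3) gl by (auto simp: lcoset_def)
  have "(\<lambda>y. x + y) ` P l = P l"
  proof
    show "(\<lambda>y. x + y) ` P l \<subseteq> P l" using sg x(1) unfolding is_subgroup_def by auto
    show "P l \<subseteq> (\<lambda>y. x + y) ` P l"
    proof
      fix y assume y: "y \<in> P l"
      have "- x + y \<in> P l" using sg x(1) y unfolding is_subgroup_def by auto
      moreover have "y = x + (- x + y)" by (simp add: add.assoc[symmetric])
      ultimately show "y \<in> (\<lambda>y. x + y) ` P l" by blast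
    qed
  qed
  moreover have "(\<lambda>y. h + y) = (\<lambda>y. g + y) \<circ> (\<lambda>y. x + y)"
    by (rule ext) (simp add: x(2) add.assoc)
  ultimately have "lcoset h (P l) = lcoset g (P l)"
    unfolding lcoset_def by (metis image_comp)
  then show ?thesis using gl by auto
qed

lemma coset_nonempty:
  assumes "w \<in> cosets \<Lambda> P" "\<forall>l\<in>\<Lambda>. is_subgroup (P l)"
  shows "\<exists>x. x \<in> w"
proof -
  obtain g l where gl: "w = lcoset g (P l)" "l \<in> \<Lambda>" using assms(1) unfolding cosets_def by blast
  then have "0 \<in> P l" using assms(2) is_subgroup_def by blast
  then show ?thesis using gl by (auto simp: lcoset_def)
qed

lemma finite_cosets_containing:
  assumes "finite \<Lambda>" "\<forall>l\<in>\<Lambda>. is_subgroup (P l)"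
  shows "finite {w. w \<in> cosets \<Lambda> P \<and> h \<in> w}"
proof -
  have "{w. w \<in> cosets \<Lambda> P \<and> h \<in> w} \<subseteq> (\<lambda>l. lcoset h (P l)) ` \<Lambda>"
    using coset_member[OF _ assms(2)] by blast
  then show ?thesis using assms(1) finite_surj by blast
qed

lemma dVW_VI: "dVW S (Inl v) (Inr w) \<le> k \<Longrightarrow> h0 \<in> w \<Longrightarrow> \<exists>h\<in>w. dS S v h \<le> k"
proof -
  assume a: "dVW S (Inl v) (Inr w) \<le> k" "h0 \<in> w"
  have "\<exists>n. \<exists>h\<in>w. dS S v h = n" using a(2) by blast
  from LeastI_ex[OF this] obtain h where "h \<in> w" "dS S v h = (LEAST n. \<exists>h\<in>w. dS S v h = n)" by blast
  then show ?thesis using a(1) by (intro bexI[of _ h]) auto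
qed

lemma dVW_IV: "dVW S (Inr w) (Inl u) \<le> k \<Longrightarrow> h0 \<in> w \<Longrightarrow> \<exists>h\<in>w. dS S h u \<le> k"
proof -
  assume a: "dVW S (Inr w) (Inl u) \<le> k" "h0 \<in> w"
  have "\<exists>n. \<exists>h\<in>w. dS S h u = n" using a(2) by blast
  from LeastI_ex[OF this] obtain h where "h \<in> w" "dS S h u = (LEAST n. \<exists>h\<in>w. dS S h u = n)" by blast
  then show ?thesis using a(1) by (intro bexI[of _ h]) auto
qed

lemma dVW_II: "dVW S (Inr w) (Inr w') \<le> k \<Longrightarrow> g0 \<in> w \<Longrightarrow> h0 \<in> w' \<Longrightarrow> \<exists>g\<in>w. \<exists>h\<in>w'. dS S g h \<le> k"
proof -
  assume a: "dVW S (Inr w) (Inr w') \<le> k" "g0 \<in> w" "h0 \<in> w'"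
  have "\<exists>n. \<exists>g\<in>w. \<exists>h\<in>w'. dS S g h = n" using a(2,3) by blast
  from LeastI_ex[OF this] obtain g h where "g \<in> w" "h \<in> w'"
    "dS S g h = (LEAST n. \<exists>g\<in>w. \<exists>h\<in>w'. dS S g h = n)" by blast
  then have "dS S g h \<le> k" using a(1) by simp
  then show ?thesis using \<open>g \<in> w\<close> \<open>h \<in> w'\<close> by blast
qed

lemma dS_reach:
  assumes conn: "\<forall>g h. \<exists>p. walk (cay_adj S) p \<and> hd p = g \<and> last p = h"
    and "dS S g h \<le> n"
  shows "reach (cay_adj S) UNIV g h n"
proof -
  have "\<exists>n p. walk (cay_adj S) p \<and> hd p = g \<and> last p = h \<and> length p = Suc n"
    using conn by (metis Suc_pred length_greater_0_conv walk_def)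
  from LeastI_ex[OF this] obtain p where
    "walk (cay_adj S) p" "hd p = g" "last p = h" "length p = Suc (dS S g h)"
    unfolding dS_def gdist_def by blast
  then show ?thesis using assms(2) unfolding reach_def by auto
qed

lemma ball_finite_reach:
  assumes "finite S"
  shows "finite {h. reach (cay_adj S) UNIV h u n}"
proof (induction n)
  case 0
  have "{h. reach (cay_adj S) UNIV h u 0} \<subseteq> {u}"
    unfolding reach_def by clarify (metis Suc_le_length_iff hd_conv_nth last_conv_nth le_Suc_eq le_zero_eq length_0_conv walk_def One_nat_def diff_Suc_1 length_Cons list.size(3) nat.distinct(1))
  then show ?case using finite_subset by blast
next
  case (Suc n)
  let ?B = "{h. reach (cay_adj S) UNIV h u n}"
  have "{h. reach (cay_adj S) UNIV h u (Suc n)} \<subseteq>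
      {u} \<union> (\<Union>s\<in>S. (\<lambda>y. y - s) ` ?B \<union> (\<lambda>y. y + s) ` ?B)"
  proof
    fix h assume "h \<in> {h. reach (cay_adj S) UNIV h u (Suc n)}"
    then have "h = u \<or> (\<exists>z. cay_adj S h z \<and> z \<in> ?B)" using reach_Suc by fastforce
    then show "h \<in> {u} \<union> (\<Union>s\<in>S. (\<lambda>y. y - s) ` ?B \<union> (\<lambda>y. y + s) ` ?B)"
    proof
      assume "h = u" then show ?thesis by simp
    next
      assume "\<exists>z. cay_adj S h z \<and> z \<in> ?B"
      then obtain z s where zs: "z \<in> ?B" "s \<in> S" "z = h + s \<or> h = z + s"
        unfolding cay_adj_def by blast
      show ?thesis
      proof (cases "z = h + s")
        case True
        then have "h = z - s" by simp
        then have "h \<in> (\<lambda>y. y - s) ` ?B" using zs(1) by blast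
        then show ?thesis using zs(2) by blast
      next
        case False
        then have "h = z + s" using zs(3) by blast
        then have "h \<in> (\<lambda>y. y + s) ` ?B" using zs(1) by blast
        then show ?thesis using zs(2) by blast
      qed
    qed
  qed
  moreover have "finite ({u} \<union> (\<Union>s\<in>S. (\<lambda>y. y - s) ` ?B \<union> (\<lambda>y. y + s) ` ?B))"
    using Suc assms by auto
  ultimately show ?case using finite_subset by blast
qed

lemma ball_finite:
  assumes "finite S" "\<forall>g h. \<exists>p. walk (cay_adj S) p \<and> hd p = g \<and> last p = h"
  shows "finite {h. dS S h u \<le> n}"
  using ball_finite_reach[OF assms(1), of u n] dS_reach[OF assms(2)]
  by (metis (mono_tags, lifting) mem_Collect_eq rev_finite_subset subsetI)


lemma fine_lemma:
  assumes fine: "fine_graph (coned_adj S \<Lambda> P)" and w1: "w1 \<in> cosets \<Lambda> P" and x1: "x1 \<in> w1"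
  shows "finite {a. a \<in> w1 \<and> reach (coned_adj S \<Lambda> P) (- {Inr w1}) (Inl a) (Inl x1) K}"
proof -
  let ?E = "coned_adj S \<Lambda> P"
  let ?C = "{c. circuit ?E c \<and> length c \<le> Suc (Suc K) \<and> circuit_contains_edge c (Inr w1) (Inl x1)}"
  have finC: "finite ?C" using fine w1 x1 unfolding fine_graph_def by simp
  have "{a. a \<in> w1 \<and> reach ?E (- {Inr w1}) (Inl a) (Inl x1) K} \<subseteq> {x1} \<union> (\<lambda>c. projl (c ! 1)) ` ?C"
  proof
    fix a assume "a \<in> {a. a \<in> w1 \<and> reach ?E (- {Inr w1}) (Inl a) (Inl x1) K}"
    then have aw: "a \<in> w1" and r: "reach ?E (- {Inr w1}) (Inl a) (Inl x1) K" by auto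
    show "a \<in> {x1} \<union> (\<lambda>c. projl (c ! 1)) ` ?C"
    proof (cases "a = x1")
      case True then show ?thesis by simp
    next
      case False
      obtain p where p: "walk ?E p" "hd p = Inl a" "last p = Inl x1" "length p \<le> Suc K" "set p \<subseteq> - {Inr w1}"
        using r unfolding reach_def by blast
      obtain q where q: "walk ?E q" "hd q = Inl a" "last q = Inl x1" "distinct q" "set q \<subseteq> - {Inr w1}" "length q \<le> Suc K"
        using walk_distinct[OF p(1)] p by (metis order_trans)
      have qne: "q \<noteq> []" using q(1) walk_def by metis
      have lq: "length q \<ge> 2"
      proof (rule ccontr)
        assume "\<not> length q \<ge> 2"
        moreover have "length q > 0" using qne by simp
        ultimately have "length q = 1" by arith
        then have "hd q = last q" by (cases q) auto
        then show False using q False by simp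
      qed
      define c where "c = Inr w1 # q"
      have circ: "circuit ?E c" unfolding circuit_def
      proof (intro conjI allI impI)
        show "3 \<le> length c" using lq c_def by simp
        show "distinct c" using q(4,5) c_def by auto
        fix i assume i: "i < length c"
        show "?E (c ! i) (c ! ((i + 1) mod length c))"
        proof (cases "i = 0")
          case True
          have "c ! 1 = Inl a" using q(2) qne c_def by (cases q) auto
          then show ?thesis using True aw w1 qne c_def by simp
        next
          case False
          show ?thesis
          proof (cases "i = length q")
            case True
            have "c ! i = Inl x1" using True q(3) qne c_def
              by (simp add: last_conv_nth)
            moreover have "(i + 1) mod length c = 0" using True c_def by simp
            ultimately show ?thesis using w1 x1 c_def by simp
          next
            case False2: False
            obtain j where j: "i = Suc j" using False by (cases i) auto
            have "Suc j < length q" using i j False2 c_def by simp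
            then have "?E (q ! j) (q ! Suc j)" using q(1) walk_def by metis
            moreover have "(i + 1) mod length c = Suc (Suc j)" using i j False2 c_def by simp
            ultimately show ?thesis using j c_def by simp
          qed
        qed
      qed
      have "c ! length q = Inl x1" using q(3) qne c_def
        by (simp add: last_conv_nth)
      moreover have "(length q + 1) mod length c = 0" using c_def by simp
      ultimately have "circuit_contains_edge c (Inr w1) (Inl x1)"
        unfolding circuit_contains_edge_def using c_def
        by (intro exI[of _ "length q"]) (auto simp: insert_commute)
      moreover have "length c \<le> Suc (Suc K)" using q(6) c_def by simp
      moreover have "projl (c ! 1) = a" using q(2) qne c_def by (cases q) auto
      ultimately show ?thesis using circ by force
    qed
  qed
  then show ?thesis using finC finite_subset by blast
qed


theorem lemma3p9:
  fixes S :: "'g::group_add set" and \<Lambda> :: "'i set" and P :: "'i \<Rightarrow> 'g set"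
    and \<epsilon> R D :: nat and U :: "('g + 'g set) set" and r :: nat
  assumes "rel_hyperbolic S \<Lambda> P"
    and "thin_triangle_constants S \<Lambda> P \<epsilon> R D"
    and "finite U" and "U \<subseteq> VW \<Lambda> P" and "card U \<ge> 2"
    and "0 < r"
  shows "finite (r_hull S \<Lambda> P \<epsilon> U r)"
proof -
  let ?E = "coned_adj S \<Lambda> P"
  have finS: "finite S" and conn: "\<forall>g h. \<exists>p. walk (cay_adj S) p \<and> hd p = g \<and> last p = h"
    and finL: "finite \<Lambda>" and sg: "\<forall>l\<in>\<Lambda>. is_subgroup (P l)" and fine: "fine_graph ?E"
    using assms(1) unfolding rel_hyperbolic_def by auto
  have ball: "\<And>u n. finite {h. dS S h u \<le> n}" using ball_finite[OF finS conn] .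
  have lift: "\<And>g h n X. dS S g h \<le> n \<Longrightarrow> range Inl \<subseteq> X \<Longrightarrow> reach ?E X (Inl g) (Inl h) n"
  proof -
    fix g h n X assume d: "dS S g h \<le> n" and rX: "range Inl \<subseteq> (X :: ('g + 'g set) set)"
    have r0: "reach (cay_adj S) UNIV g h n" using dS_reach[OF conn d] .
    have "reach ?E (Inl ` UNIV) (Inl g) (Inl h) n" by (rule reach_map[OF r0]) simp
    from reach_mono[OF this rX order_refl] show "reach ?E X (Inl g) (Inl h) n" .
  qed
  have liftr: "\<And>g h n X. dS S g h \<le> n \<Longrightarrow> range Inl \<subseteq> X \<Longrightarrow> reach ?E X (Inl h) (Inl g) n"
  proof -
    fix g h n X assume "dS S g h \<le> n" "range Inl \<subseteq> (X :: ('g + 'g set) set)"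
    from lift[OF this] show "reach ?E X (Inl h) (Inl g) n" by (rule reach_sym) (rule coned_sym)
  qed
  have cosVW: "\<And>w. Inr w \<in> VW \<Lambda> P \<Longrightarrow> w \<in> cosets \<Lambda> P" unfolding VW_def by auto
  show ?thesis
  proof (cases "\<exists>u. Inl u \<in> U")
    case True
    then obtain u where u: "Inl u \<in> U" by blast
    have "r_hull S \<Lambda> P \<epsilon> U r \<subseteq> Inl ` {v. dS S v u \<le> r} \<union>
        Inr ` (\<Union>h\<in>{h. dS S h u \<le> r + \<epsilon>}. {w. w \<in> cosets \<Lambda> P \<and> h \<in> w})"
    proof
      fix x assume x: "x \<in> r_hull S \<Lambda> P \<epsilon> U r"
      show "x \<in> Inl ` {v. dS S v u \<le> r} \<union>
        Inr ` (\<Union>h\<in>{h. dS S h u \<le> r + \<epsilon>}. {w. w \<in> cosets \<Lambda> P \<and> h \<in> w})"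
      proof (cases x)
        case (Inl v) then show ?thesis using x u unfolding r_hull_def by force
      next
        case (Inr w)
        then have w: "w \<in> cosets \<Lambda> P" "dVW S (Inr w) (Inl u) \<le> r + \<epsilon>"
          using x u unfolding r_hull_def by auto
        obtain h0 where "h0 \<in> w" using coset_nonempty[OF w(1) sg] by blast
        then obtain h where "h \<in> w" "dS S h u \<le> r + \<epsilon>" using dVW_IV w(2) by blast
        then show ?thesis using Inr w(1) by blast
      qed
    qed
    moreover have "finite (Inl ` {v. dS S v u \<le> r} \<union>
        Inr ` (\<Union>h\<in>{h. dS S h u \<le> r + \<epsilon>}. {w. w \<in> cosets \<Lambda> P \<and> h \<in> w}))"
      using ball finite_cosets_containing[OF finL sg] by auto
    ultimately show ?thesis using finite_subset by blast
  next
    case False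
    obtain y1 where y1: "y1 \<in> U" using assms(5) by fastforce
    have "U - {y1} \<noteq> {}"
    proof
      assume "U - {y1} = {}"
      then have "U = {y1}" using y1 by auto
      then show False using assms(5) by simp
    qed
    then obtain y2 where y2: "y2 \<in> U" "y2 \<noteq> y1" by blast
    obtain w1 where w1: "y1 = Inr w1" using False y1 by (cases y1) auto
    obtain w2 where w2: "y2 = Inr w2" using False y2 by (cases y2) auto
    have w1c: "w1 \<in> cosets \<Lambda> P" and w2c: "w2 \<in> cosets \<Lambda> P"
      using cosVW assms(4) y1 y2 w1 w2 by auto
    have w12: "w1 \<noteq> w2" using y2 w1 w2 by simp
    obtain x1 where x1: "x1 \<in> w1" using coset_nonempty[OF w1c sg] by blast
    obtain x2 where x2: "x2 \<in> w2" using coset_nonempty[OF w2c sg] by blast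
    define X where "X = - {Inr w1 :: 'g + 'g set}"
    have rX: "range Inl \<subseteq> X" unfolding X_def by auto
    have R2: "reach ?E X (Inr w2) (Inl x1) (1 + dS S x2 x1)"
      using reach_trans[OF reach_edge[of ?E "Inr w2" "Inl x2" X] lift[OF order_refl rX]]
        x2 w2c w12 rX unfolding X_def by auto
    have Rb: "\<And>b. b \<in> w2 \<Longrightarrow> reach ?E X (Inl b) (Inl x1) (1 + (1 + dS S x2 x1))"
      using reach_trans[OF reach_edge[of ?E _ "Inr w2" X] R2] w2c w12 rX unfolding X_def by auto
    define L where "L = 1 + (1 + dS S x2 x1)"
    define K where "K = (r + \<epsilon>) + (1 + 1) + (r + \<epsilon>) + L"
    let ?A = "{a. a \<in> w1 \<and> reach ?E X (Inl a) (Inl x1) K}"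
    have finA: "finite ?A" using fine_lemma[OF fine w1c x1] unfolding X_def .
    have "r_hull S \<Lambda> P \<epsilon> U r \<subseteq> Inl ` (\<Union>a\<in>?A. {v. dS S v a \<le> r}) \<union>
        Inr ` ({w1, w2} \<union> (\<Union>a\<in>?A. \<Union>h\<in>{h. dS S h a \<le> r + \<epsilon>}. {w. w \<in> cosets \<Lambda> P \<and> h \<in> w}))"
    proof
      fix x assume x: "x \<in> r_hull S \<Lambda> P \<epsilon> U r"
      show "x \<in> Inl ` (\<Union>a\<in>?A. {v. dS S v a \<le> r}) \<union>
        Inr ` ({w1, w2} \<union> (\<Union>a\<in>?A. \<Union>h\<in>{h. dS S h a \<le> r + \<epsilon>}. {w. w \<in> cosets \<Lambda> P \<and> h \<in> w}))"
      proof (cases x)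
        case (Inl v)
        then have d1: "dVW S (Inl v) (Inr w1) \<le> r" and d2: "dVW S (Inl v) (Inr w2) \<le> r"
          using x y1 y2 w1 w2 unfolding r_hull_def by auto
        obtain a where a: "a \<in> w1" "dS S v a \<le> r" using dVW_VI[OF d1 x1] by blast
        obtain b where b: "b \<in> w2" "dS S v b \<le> r" using dVW_VI[OF d2 x2] by blast
        have "reach ?E X (Inl a) (Inl x1) (r + r + L)"
          using reach_trans[OF reach_trans[OF liftr[OF a(2) rX] lift[OF b(2) rX]] Rb[OF b(1)]]
          unfolding L_def by simp
        then have "reach ?E X (Inl a) (Inl x1) K"
          by (rule reach_mono) (auto simp: K_def)
        then show ?thesis using Inl a by blast
      next
        case (Inr w)
        then have wc: "w \<in> cosets \<Lambda> P" and d1: "dVW S (Inr w) (Inr w1) \<le> r + \<epsilon>"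
          and d2: "dVW S (Inr w) (Inr w2) \<le> r + \<epsilon>"
          using x y1 y2 w1 w2 unfolding r_hull_def by auto
        show ?thesis
        proof (cases "w = w1 \<or> w = w2")
          case True then show ?thesis using Inr by auto
        next
          case False
          obtain c0 where c0: "c0 \<in> w" using coset_nonempty[OF wc sg] by blast
          obtain c a where ca: "c \<in> w" "a \<in> w1" "dS S c a \<le> r + \<epsilon>" using dVW_II[OF d1 c0 x1] by blast
          obtain c' b where cb: "c' \<in> w" "b \<in> w2" "dS S c' b \<le> r + \<epsilon>" using dVW_II[OF d2 c0 x2] by blast
          have wX: "Inr w \<in> X" using False unfolding X_def by auto
          have m: "reach ?E X (Inl c) (Inl c') (1 + 1)"
            using reach_trans[OF reach_edge[of ?E "Inl c" "Inr w" X] reach_edge[of ?E "Inr w" "Inl c'" X]]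
              ca cb wc wX rX by auto
          have "reach ?E X (Inl a) (Inl x1) K"
            using reach_trans[OF reach_trans[OF reach_trans[OF liftr[OF ca(3) rX] m] lift[OF cb(3) rX]] Rb[OF cb(2)]]
            unfolding K_def L_def by simp
          then show ?thesis using Inr ca wc by blast
        qed
      qed
    qed
    moreover have "finite (Inl ` (\<Union>a\<in>?A. {v. dS S v a \<le> r}) \<union>
        Inr ` ({w1, w2} \<union> (\<Union>a\<in>?A. \<Union>h\<in>{h. dS S h a \<le> r + \<epsilon>}. {w. w \<in> cosets \<Lambda> P \<and> h \<in> w})))"
      using finA ball finite_cosets_containing[OF finL sg] by auto
    ultimately show ?thesis using finite_subset by blast
  qed
qed

end
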